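(* For every $M>0$ there is an admissible set $\{a_1,\dots,a_k\}$ with $\sum_{i=1}^k 1/a_i>M$.
   Context: A finite set $\{a_1,\dots,a_k\}$ of positive integers is admissible if there is no prime $p$ such that $p$ divides $n\prod_{i=1}^k(a_in+1)$ for every integer $n$. *)

theory Defs
  imports Complex_Main "HOL-Computational_Algebra.Primes"
begin

definition admissible :: "nat set \<Rightarrow> bool" where
  "admissible A \<longleftrightarrow> finite A \<and> (\<forall>a\<in>A. a > 0) \<and>
     \<not> (\<exists>p::nat. prime p \<and>
          (\<forall>n::int. int p dvd n * (\<Prod>a\<in>A. int a * n + 1)))"

end

theory Submission imports Defs "HOL-Number_Theory.Number_Theory" "HOL-Library.FuncSet" begin


lemma admissible_from_classes:
  assumes fin: "finite A" and pos: "\<forall>a\<in>A. a > 0"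
    and cls: "\<And>p. prime p \<Longrightarrow> \<exists>r. 0 < r \<and> r < p \<and> (\<forall>a\<in>A. a mod p \<noteq> r)"
  shows "admissible A"
  unfolding admissible_def
proof (intro conjI fin pos notI)
  assume "\<exists>p::nat. prime p \<and> (\<forall>n::int. int p dvd n * (\<Prod>a\<in>A. int a * n + 1))"
  then obtain p where pp: "prime p" and hd: "\<And>n::int. int p dvd n * (\<Prod>a\<in>A. int a * n + 1)" by blast
  obtain r where r0: "0 < r" and rp: "r < p" and rA: "\<forall>a\<in>A. a mod p \<noteq> r" using cls[OF pp] by blast
  have ip: "prime (int p)" using pp by simp
  have "coprime (int r) (int p)"
  proof -
    have "\<not> p dvd r" using r0 rp by (auto dest: dvd_imp_le)
    then have "coprime p r" using pp by (simp add: prime_imp_coprime)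
    then show ?thesis by (simp add: coprime_commute)
  qed
  then obtain u where hu: "[int r * u = 1] (mod int p)" using cong_solve_coprime_int by blast
  then have du: "int p dvd int r * u - 1" by (simp add: cong_iff_dvd_diff)
  have nu: "\<not> int p dvd u"
  proof
    assume "int p dvd u"
    then have "int p dvd int r * u" by simp
    from dvd_diff[OF this du] have "int p dvd 1" by simp
    then show False using ip by (simp add: prime_int_iff)
  qed
  have "int p dvd (-u) * (\<Prod>a\<in>A. int a * (-u) + 1)" by (rule hd)
  then have "int p dvd (-u) \<or> int p dvd (\<Prod>a\<in>A. int a * (-u) + 1)"
    using prime_dvd_mult_iff[OF ip] by simp
  then show False
  proof
    assume "int p dvd -u" then show False using nu by simp
  next
    assume "int p dvd (\<Prod>a\<in>A. int a * (-u) + 1)"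
    then have "\<exists>a\<in>A. int p dvd int a * (-u) + 1" by (simp add: prime_dvd_prod_iff[OF fin ip])
    then obtain a where aA: "a \<in> A" and da: "int p dvd int a * (-u) + 1" by blast
    have "int p dvd (int r * u - 1) + (int a * (-u) + 1)" using du da by (rule dvd_add)
    then have "int p dvd (int r - int a) * u" by (simp add: algebra_simps)
    then have "int p dvd int r - int a" using prime_dvd_mult_iff[OF ip] nu by simp
    then have "int r mod int p = int a mod int p" by (simp add: mod_eq_dvd_iff)
    then have "int (r mod p) = int (a mod p)" by (simp add: of_nat_mod)
    then have "r mod p = a mod p" by simp
    then have "a mod p = r" using rp by simp
    then show False using rA aA by blast
  qed
qed


definition Pset :: "nat \<Rightarrow> nat set" where "Pset n = {p. prime p \<and> p \<le> n}"
definition Fp :: "nat \<Rightarrow> real" where "Fp n = (\<Sum>p\<in>Pset n. ln (real p) / real p)"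
definition Sp :: "nat \<Rightarrow> real" where "Sp n = (\<Sum>p\<in>Pset n. 1 / real p)"

lemma finite_Pset [simp]: "finite (Pset n)"
  unfolding Pset_def by (rule finite_subset[of _ "{..n}"]) auto

lemma Pset_Suc: "Pset (Suc n) = (if prime (Suc n) then insert (Suc n) (Pset n) else Pset n)"
  unfolding Pset_def by (auto simp: le_Suc_eq)

lemma Suc_notin_Pset [simp]: "Suc n \<notin> Pset n"
  unfolding Pset_def by auto

lemma card_Pset: "card (Pset n) \<le> n"
proof -
  have "Pset n \<subseteq> {1..n}" unfolding Pset_def using prime_ge_1_nat by auto
  then have "card (Pset n) \<le> card {1..n}" by (intro card_mono) auto
  then show ?thesis by simp
qed

lemma prod_primes_dvd:
  fixes x :: nat
  assumes "finite T" "\<forall>p\<in>T. prime p" "\<forall>p\<in>T. p dvd x"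
  shows "\<Prod>T dvd x"
  using assms
proof (induction T rule: finite_induct)
  case empty then show ?case by simp
next
  case (insert q T)
  have pq: "prime q" using insert by simp
  have "\<not> q dvd \<Prod>T"
  proof
    assume "q dvd \<Prod>T"
    then obtain t where "t \<in> T" "q dvd t" using prime_dvd_prod_iff[OF insert(1) pq] by auto
    then have "q = t" using insert(4) pq \<open>t \<in> T\<close> by (metis insert_iff primes_dvd_imp_eq)
    then show False using insert(2) \<open>t \<in> T\<close> by simp
  qed
  then have "coprime q (\<Prod>T)" using pq by (simp add: prime_imp_coprime)
  moreover have "\<Prod>T dvd x" using insert by simp
  moreover have "q dvd x" using insert by simp
  ultimately have "q * \<Prod>T dvd x" by (simp add: divides_mult)
  then show ?case using insert by simp
qed

lemma legendre_lb:
  fixes T :: "nat set"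
  assumes fT: "finite T" and pT: "\<forall>p\<in>T. prime p"
  shows "(\<Sum>p\<in>T. real (m div p) * ln (real p)) \<le> ln (fact m)"
proof (induction m)
  case 0 then show ?case by simp
next
  case (Suc m)
  let ?D = "{p\<in>T. p dvd Suc m}"
  have fD: "finite ?D" using fT by simp
  have eq: "\<And>p. real (Suc m div p) * ln (real p) = real (m div p) * ln (real p) + (if p dvd Suc m then ln (real p) else 0)"
    by (simp add: div_Suc dvd_eq_mod_eq_0 algebra_simps)
  have "(\<Sum>p\<in>T. real (Suc m div p) * ln (real p)) = (\<Sum>p\<in>T. real (m div p) * ln (real p)) + (\<Sum>p\<in>T. (if p dvd Suc m then ln (real p) else 0))"
    by (simp add: eq sum.distrib)
  also have "(\<Sum>p\<in>T. (if p dvd Suc m then ln (real p) else 0)) = (\<Sum>p\<in>?D. ln (real p))"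
    using fT by (simp add: sum.inter_filter)
  also have "\<dots> = ln (real (\<Prod>?D))"
  proof -
    have "\<forall>p\<in>?D. real p \<noteq> 0" using pT by (auto simp: prime_gt_0_nat)
    then have "ln (\<Prod>p\<in>?D. real p) = (\<Sum>p\<in>?D. ln (real p))" by (intro ln_prod[OF fD]) auto
    then show ?thesis by simp
  qed
  also have "\<dots> \<le> ln (real (Suc m))"
  proof -
    have "\<Prod>?D dvd Suc m" using prod_primes_dvd[OF fD] pT by auto
    then have "\<Prod>?D \<le> Suc m" by (rule dvd_imp_le) simp
    moreover have "\<Prod>?D > 0" using pT by (auto simp: prime_gt_0_nat)
    ultimately have a: "real (\<Prod>?D) \<le> real (Suc m)" and b: "0 < real (\<Prod>?D)"
      by (simp only: of_nat_le_iff, simp only: of_nat_0_less_iff)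
    show ?thesis by (rule ln_mono[OF a b])
  qed
  finally have "(\<Sum>p\<in>T. real (Suc m div p) * ln (real p)) \<le> ln (fact m) + ln (real (Suc m))"
    using Suc by linarith
  also have "\<dots> = ln (fact (Suc m))"
    by (simp add: ln_mult fact_gt_zero)
  finally show ?case .
qed

lemma Pset_prime: "p \<in> Pset n \<Longrightarrow> prime p" and Pset_le: "p \<in> Pset n \<Longrightarrow> p \<le> n"
  unfolding Pset_def by auto

lemma Fp_bound:
  assumes n2: "n \<ge> 2"
  shows "Fp n \<le> ln (real n) + ln (ln (real n) + 1) + 1"
proof -
  define L where "L = ln (real n)"
  have Lpos: "L > 0" unfolding L_def using n2 by simp
  define k where "k = nat \<lceil>L\<rceil>"
  have k1: "real k \<ge> L" unfolding k_def by linarith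
  have k2: "real k \<le> L + 1" unfolding k_def using Lpos by linarith
  have kpos: "real k > 0" using k1 Lpos by linarith
  define N where "N = n * k"
  have RN: "real N = real n * real k" unfolding N_def by simp
  have Npos: "real N > 0" using RN kpos n2 by simp
  have h1: "(\<Sum>p\<in>Pset n. real (N div p) * ln (real p)) \<le> ln (fact N)"
    by (rule legendre_lb) (auto dest: Pset_prime)
  have h2: "ln (fact N) \<le> real N * ln (real N)"
  proof -
    have "(fact N :: real) \<le> real (N ^ N)" by (rule fact_le_power)
    then have "ln (fact N :: real) \<le> ln (real (N ^ N))" by (intro ln_mono) (auto simp: fact_gt_zero)
    also have "\<dots> = real N * ln (real N)" using Npos by (simp add: ln_realpow)
    finally show ?thesis .
  qed
  have h3: "\<And>p. p \<in> Pset n \<Longrightarrow> (real N / real p - 1) * ln (real p) \<le> real (N div p) * ln (real p)"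
  proof -
    fix p assume pP: "p \<in> Pset n"
    have pp: "p > 0" using Pset_prime[OF pP] prime_gt_0_nat by blast
    have "N = p * (N div p) + N mod p" by simp
    moreover have "N mod p < p" using pp by simp
    ultimately have "real N < real p * real (N div p) + real p"
      by (metis add_less_cancel_left of_nat_add of_nat_less_iff of_nat_mult)
    then have "real N / real p - 1 \<le> real (N div p)" using pp by (simp add: field_simps)
    moreover have "ln (real p) \<ge> 0" using pp by simp
    ultimately show "(real N / real p - 1) * ln (real p) \<le> real (N div p) * ln (real p)"
      by (rule mult_right_mono)
  qed
  have h4: "(\<Sum>p\<in>Pset n. ln (real p)) \<le> real n * L"
  proof -
    have "(\<Sum>p\<in>Pset n. ln (real p)) \<le> (\<Sum>p\<in>Pset n. L)"
    proof (intro sum_mono)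
      fix p assume pP: "p \<in> Pset n"
      have "p > 0" using Pset_prime[OF pP] prime_gt_0_nat by blast
      then show "ln (real p) \<le> L" unfolding L_def using Pset_le[OF pP] by (intro ln_mono) auto
    qed
    also have "\<dots> = real (card (Pset n)) * L" by simp
    also have "\<dots> \<le> real n * L" using card_Pset Lpos by (intro mult_right_mono) auto
    finally show ?thesis .
  qed
  have "(\<Sum>p\<in>Pset n. (real N / real p - 1) * ln (real p)) = real N * Fp n - (\<Sum>p\<in>Pset n. ln (real p))"
    unfolding Fp_def by (simp add: algebra_simps sum_subtractf sum_distrib_left)
  moreover have "(\<Sum>p\<in>Pset n. (real N / real p - 1) * ln (real p)) \<le> (\<Sum>p\<in>Pset n. real (N div p) * ln (real p))"
    by (intro sum_mono h3)
  ultimately have "real N * Fp n \<le> real N * ln (real N) + real n * L"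
    using h1 h2 h4 by linarith
  then have "Fp n \<le> ln (real N) + real n * L / real N"
    using Npos by (simp add: field_simps)
  also have "real n * L / real N = L / real k" using RN n2 by simp
  also have "L / real k \<le> 1" using k1 kpos by simp
  also have "ln (real N) = L + ln (real k)" unfolding L_def RN using kpos n2 by (simp add: ln_mult)
  also have "ln (real k) \<le> ln (L + 1)" using k2 kpos by (intro ln_mono) auto
  finally show ?thesis unfolding L_def by simp
qed

definition Gf :: "real \<Rightarrow> real" where "Gf u = (ln (u + 1) + 2) / u"

lemma abelA:
  fixes u v :: real
  assumes "0 < u" "u \<le> v"
  shows "u * (1/u - 1/v) \<le> ln v - ln u"
proof -
  have v0: "0 < v" using assms by linarith
  have "ln (u / v) \<le> u / v - 1" using assms v0 by (intro ln_le_minus_one) simp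
  then have "ln u - ln v \<le> u / v - 1" using assms v0 by (simp add: ln_div)
  moreover have "u * (1/u - 1/v) = 1 - u / v" using assms by (simp add: field_simps)
  ultimately show ?thesis by linarith
qed

lemma abelB:
  fixes u v :: real
  assumes u0: "0 < u" and uv: "u \<le> v"
  shows "(ln (u + 1) + 1) * (1/u - 1/v) \<le> Gf u - Gf v"
proof -
  have v0: "0 < v" using assms by linarith
  have "ln ((v + 1) / (u + 1)) \<le> (v + 1) / (u + 1) - 1" using assms v0 by (intro ln_le_minus_one) simp
  then have l1: "ln (v + 1) - ln (u + 1) \<le> (v - u) / (u + 1)" using assms v0
    by (simp add: ln_div field_simps)
  have "(v - u) / (u + 1) \<le> (v - u) / u" using assms by (intro divide_left_mono) auto
  with l1 have l2: "ln (v + 1) - ln (u + 1) \<le> (v - u) / u" by linarith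
  have l3: "(ln (v + 1) - ln (u + 1)) / v \<le> ((v - u) / u) / v" using l2 v0 by (intro divide_right_mono) auto
  have e1: "((v - u) / u) / v = 1/u - 1/v" using u0 v0 by (simp add: field_simps)
  have e2: "Gf u - Gf v - (ln (u + 1) + 1) * (1/u - 1/v) = (1/u - 1/v) - (ln (v + 1) - ln (u + 1)) / v"
    unfolding Gf_def using u0 v0 by (simp add: field_simps)
  show ?thesis using l3 e1 e2 by linarith
qed

definition Qf :: "nat \<Rightarrow> real" where "Qf N = Sp N - Fp N / ln (real N)"
definition Phi :: "nat \<Rightarrow> real" where "Phi N = Qf N - ln (ln (real N)) + Gf (ln (real N))"

lemma Sp_Suc: "Sp (Suc N) = Sp N + (if prime (Suc N) then 1 / real (Suc N) else 0)"
  unfolding Sp_def by (simp add: Pset_Suc)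

lemma Fp_Suc: "Fp (Suc N) = Fp N + (if prime (Suc N) then ln (real (Suc N)) / real (Suc N) else 0)"
  unfolding Fp_def by (simp add: Pset_Suc)

lemma Qf_Suc:
  assumes "N \<ge> 2"
  shows "Qf (Suc N) = Qf N + Fp N * (1 / ln (real N) - 1 / ln (real (Suc N)))"
proof -
  have l: "ln (real (Suc N)) > 0" using assms by simp
  show ?thesis unfolding Qf_def Sp_Suc Fp_Suc using l
    by (auto simp: field_simps)
qed

lemma Phi_Suc:
  assumes N2: "N \<ge> 2"
  shows "Phi (Suc N) \<le> Phi N"
proof -
  define u where "u = ln (real N)"
  define v where "v = ln (real (Suc N))"
  have u0: "0 < u" unfolding u_def using N2 by simp
  have uv: "u \<le> v" unfolding u_def v_def using N2 by simp
  have d0: "0 \<le> 1/u - 1/v" using u0 uv by (simp add: frac_le)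
  have "Fp N \<le> u + ln (u + 1) + 1" unfolding u_def using Fp_bound[OF N2] by simp
  then have "Fp N * (1/u - 1/v) \<le> (u + (ln (u + 1) + 1)) * (1/u - 1/v)"
    using d0 by (intro mult_right_mono) auto
  also have "\<dots> = u * (1/u - 1/v) + (ln (u + 1) + 1) * (1/u - 1/v)" by (simp add: algebra_simps)
  also have "\<dots> \<le> (ln v - ln u) + (Gf u - Gf v)" using abelA[OF u0 uv] abelB[OF u0 uv] by linarith
  finally have "Fp N * (1/u - 1/v) \<le> (ln v - ln u) + (Gf u - Gf v)" .
  then show ?thesis unfolding Phi_def Qf_Suc[OF N2] u_def v_def by simp
qed

lemma Phi_le:
  assumes "N \<ge> 2" shows "Phi N \<le> Phi 2"
  using assms
proof (induction N rule: dec_induct)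
  case base then show ?case by simp
next
  case (step n) then show ?case using Phi_Suc[of n] by simp
qed

lemma mertens: "\<exists>C. \<forall>N\<ge>3. Sp N \<le> ln (ln (real N)) + C"
proof (intro exI allI impI)
  fix N :: nat assume N3: "N \<ge> 3"
  define u where "u = ln (real N)"
  have "exp 1 \<le> real N" using exp_le N3 by linarith
  then have u1: "u \<ge> 1" unfolding u_def using N3
    by (metis exp_gt_zero exp_le_cancel_iff exp_ln_iff less_le_trans)
  have P: "Phi N \<le> Phi 2" using Phi_le N3 by simp
  have G0: "Gf u \<ge> 0" unfolding Gf_def using u1 by (simp add: add_nonneg_nonneg)
  have F: "Fp N \<le> u + ln (u + 1) + 1" unfolding u_def using Fp_bound N3 by simp
  have "ln (u + 1) \<le> u" using ln_add_one_self_le_self[of u] u1 by (simp add: add.commute)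
  then have "Fp N / u \<le> (u + u + 1) / u" using F u1 by (intro divide_right_mono) auto
  also have "\<dots> \<le> 3" using u1 by (simp add: field_simps)
  finally have F3: "Fp N / u \<le> 3" .
  have "Sp N = Phi N + ln u - Gf u + Fp N / u" unfolding Phi_def Qf_def u_def by simp
  then show "Sp N \<le> ln (ln (real N)) + (Phi 2 + 3)" using P G0 F3 unfolding u_def by linarith
qed


lemma count_class:
  fixes p y c :: nat
  assumes p0: "p > 0"
  shows "real (card {b\<in>{y+1..2*y}. b mod p = c}) \<le> real y / real p + 2"
proof -
  let ?S = "{b\<in>{y+1..2*y}. b mod p = c}"
  have inj: "inj_on (\<lambda>b. b div p) ?S"
  proof (rule inj_onI)
    fix b1 b2 assume "b1 \<in> ?S" "b2 \<in> ?S" "b1 div p = b2 div p"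
    then show "b1 = b2" by (metis (mono_tags, lifting) div_mult_mod_eq mem_Collect_eq)
  qed
  have sub: "(\<lambda>b. b div p) ` ?S \<subseteq> {(y+1) div p .. (2*y) div p}"
    by (auto intro: div_le_mono)
  have "card ?S = card ((\<lambda>b. b div p) ` ?S)" using inj by (simp add: card_image)
  also have "\<dots> \<le> card {(y+1) div p .. (2*y) div p}" using sub by (intro card_mono) auto
  also have "\<dots> = Suc ((2*y) div p) - (y+1) div p" by simp
  finally have c1: "card ?S \<le> Suc ((2*y) div p) - (y+1) div p" .
  have r1: "real ((2*y) div p) \<le> real (2*y) / real p"
    by (rule of_nat_div_le_of_nat)
  have r2: "real ((y+1) div p) \<ge> real (y+1) / real p - 1"
  proof -
    have "y + 1 = p * ((y+1) div p) + (y+1) mod p" by simp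
    moreover have "(y+1) mod p < p" using p0 by simp
    ultimately have "real (y+1) < real p * real ((y+1) div p) + real p"
      by (metis add_less_cancel_left of_nat_add of_nat_less_iff of_nat_mult)
    then show ?thesis using p0 by (simp add: field_simps)
  qed
  have "real (card ?S) \<le> real (Suc ((2*y) div p) - (y+1) div p)" using c1 by simp
  also have "\<dots> \<le> real ((2*y) div p) + 1 - real ((y+1) div p)"
  proof -
    have "(y+1) div p \<le> (Suc (2*y)) div p" by (intro div_le_mono) simp
    also have "\<dots> \<le> Suc ((2*y) div p)" by (simp add: div_Suc)
    finally have "(y+1) div p \<le> Suc ((2*y) div p)" .
    then show ?thesis by (simp add: of_nat_diff)
  qed
  also have "\<dots> \<le> real (2*y) / real p + 1 - (real (y+1) / real p - 1)" using r1 r2 by linarith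
  also have "\<dots> = (real y - 1) / real p + 2" using p0 by (simp add: field_simps)
  also have "\<dots> \<le> real y / real p + 2" using p0 by (simp add: divide_right_mono)
  finally show ?thesis .
qed

lemma count_W:
  fixes p y :: nat
  assumes pp: "prime p" and p5: "p \<ge> 5" and fW: "finite W"
  shows "real (card {b\<in>{y+1..2*y}. (6*b) mod p \<in> W}) \<le> real (card W) * (real y / real p + 2)"
proof -
  define S where "S w = {b\<in>{y+1..2*y}. (6*b) mod p = w}" for w
  have cop: "coprime 6 p"
  proof -
    have "\<not> p dvd 6"
    proof
      assume d: "p dvd 6"
      then have "p \<le> 6" by (rule dvd_imp_le) simp
      then have "p = 5 \<or> p = 6" using p5 by arith
      moreover have "\<not> p = 6"
      proof
        assume "p = 6"
        then have "(2::nat) = 1 \<or> 2 = p" using pp unfolding prime_nat_iff by (metis dvd_triv_left numeral_times_numeral num_double)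
        then show False using \<open>p = 6\<close> by simp
      qed
      ultimately show False using d by simp
    qed
    then have "coprime p 6" using pp by (simp add: prime_imp_coprime)
    then show ?thesis by (simp add: coprime_commute)
  qed
  have each: "real (card (S w)) \<le> real y / real p + 2" for w
  proof (cases "S w = {}")
    case True then show ?thesis by simp
  next
    case False
    then obtain b0 where b0: "b0 \<in> S w" by auto
    have "S w \<subseteq> {b\<in>{y+1..2*y}. b mod p = b0 mod p}"
    proof
      fix b assume bS: "b \<in> S w"
      then have "[6*b = 6*b0] (mod p)" using b0 unfolding S_def cong_def by auto
      then have "[b = b0] (mod p)" using cong_mult_lcancel_nat[OF cop] by simp
      then show "b \<in> {b\<in>{y+1..2*y}. b mod p = b0 mod p}" using bS unfolding S_def cong_def by auto
    qed
    then have "card (S w) \<le> card {b\<in>{y+1..2*y}. b mod p = b0 mod p}" by (intro card_mono) auto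
    then have "real (card (S w)) \<le> real (card {b\<in>{y+1..2*y}. b mod p = b0 mod p})" by simp
    also have "\<dots> \<le> real y / real p + 2" using count_class pp prime_gt_0_nat by blast
    finally show ?thesis .
  qed
  have "{b\<in>{y+1..2*y}. (6*b) mod p \<in> W} = (\<Union>w\<in>W. S w)" unfolding S_def by auto
  then have "card {b\<in>{y+1..2*y}. (6*b) mod p \<in> W} \<le> (\<Sum>w\<in>W. card (S w))"
    using card_UN_le[OF fW] by simp
  then have "real (card {b\<in>{y+1..2*y}. (6*b) mod p \<in> W}) \<le> (\<Sum>w\<in>W. real (card (S w)))"
    by (metis of_nat_le_iff of_nat_sum)
  also have "\<dots> \<le> (\<Sum>w\<in>W. real y / real p + 2)" by (intro sum_mono each)
  also have "\<dots> = real (card W) * (real y / real p + 2)" by simp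
  finally show ?thesis .
qed

definition Wset :: "nat \<Rightarrow> nat set" where "Wset p = {p div 2 + 1 ..< p}"
definition PP :: "nat \<Rightarrow> nat set" where "PP B = {p. prime p \<and> 5 \<le> p \<and> p \<le> 6*B+1}"
definition GG :: "nat \<Rightarrow> nat set" where "GG B = (\<lambda>b. 6*b) ` {1..B}"
definition AA :: "nat \<Rightarrow> (nat \<Rightarrow> nat) \<Rightarrow> nat set" where
  "AA B r = {a\<in>GG B. \<forall>p\<in>PP B. a mod p \<noteq> r p}"

lemma finite_PP [simp]: "finite (PP B)"
  unfolding PP_def by (rule finite_subset[of _ "{..6*B+1}"]) auto

lemma finite_GG [simp]: "finite (GG B)" unfolding GG_def by simp

lemma finite_Wset [simp]: "finite (Wset p)" unfolding Wset_def by simp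

lemma card_Wset_ge: "p \<ge> 5 \<Longrightarrow> real (card (Wset p)) \<ge> real p / 4"
  unfolding Wset_def by simp

lemma card_Wset_ge2: "p \<ge> 5 \<Longrightarrow> card (Wset p) \<ge> 2"
  unfolding Wset_def by simp

lemma adm_AA:
  assumes r: "r \<in> PiE (PP B) Wset"
  shows "admissible (AA B r)"
proof (rule admissible_from_classes)
  show "finite (AA B r)" unfolding AA_def by simp
  show "\<forall>a\<in>AA B r. 0 < a" unfolding AA_def GG_def by auto
next
  fix p :: nat assume pp: "prime p"
  have p2: "p \<ge> 2" using pp prime_ge_2_nat by blast
  show "\<exists>s. 0 < s \<and> s < p \<and> (\<forall>a\<in>AA B r. a mod p \<noteq> s)"
  proof (cases "p \<le> 3")
    case True
    then have "p = 2 \<or> p = 3" using p2 by arith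
    then have "\<forall>a\<in>AA B r. a mod p \<noteq> 1" unfolding AA_def GG_def by auto
    then show ?thesis using p2 by (intro exI[of _ 1]) auto
  next
    case False
    then have p4: "p \<ge> 4" by simp
    have "p \<noteq> 4" using pp by (metis dvd_triv_left numeral_Bit0_eq_double prime_nat_iff mult_2 add_self_div_2 one_add_one numeral_One num.distinct(1) numeral_eq_iff semiring_norm(85) zero_neq_numeral numeral_Bit0 dvd_add_triv_left_iff dvd_refl)
    then have p5: "p \<ge> 5" using p4 by simp
    show ?thesis
    proof (cases "p \<le> 6*B+1")
      case True
      then have pP: "p \<in> PP B" unfolding PP_def using pp p5 by simp
      then have "r p \<in> Wset p" using r by (auto simp: PiE_iff)
      then have "0 < r p \<and> r p < p" unfolding Wset_def by auto
      moreover have "\<forall>a\<in>AA B r. a mod p \<noteq> r p" using pP unfolding AA_def by auto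
      ultimately show ?thesis by blast
    next
      case False
      have "\<forall>a\<in>AA B r. a mod p \<noteq> p - 1"
      proof
        fix a assume "a \<in> AA B r"
        then have "a \<le> 6*B" unfolding AA_def GG_def by auto
        then have "a < p - 1" using False by simp
        then show "a mod p \<noteq> p - 1" by simp
      qed
      then show ?thesis using p5 by (intro exI[of _ "p - 1"]) auto
    qed
  qed
qed

lemma card_avoid:
  "card {r\<in>PiE (PP B) Wset. \<forall>p\<in>PP B. a mod p \<noteq> r p} = (\<Prod>p\<in>PP B. card (Wset p - {a mod p}))"
proof -
  have "{r\<in>PiE (PP B) Wset. \<forall>p\<in>PP B. a mod p \<noteq> r p} = PiE (PP B) (\<lambda>p. Wset p - {a mod p})"
    unfolding PiE_def Pi_def extensional_def by auto
  then show ?thesis by (simp add: card_PiE)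
qed

lemma avg_identity:
  "(\<Sum>r\<in>PiE (PP B) Wset. \<Sum>a\<in>AA B r. 1 / real a)
     = (\<Sum>a\<in>GG B. (1 / real a) * real (\<Prod>p\<in>PP B. card (Wset p - {a mod p})))"
proof -
  let ?R = "PiE (PP B) Wset"
  have fR: "finite ?R" by (simp add: finite_PiE)
  have "(\<Sum>r\<in>?R. \<Sum>a\<in>AA B r. 1 / real a) = (\<Sum>r\<in>?R. \<Sum>a\<in>GG B. if (\<forall>p\<in>PP B. a mod p \<noteq> r p) then 1 / real a else 0)"
    unfolding AA_def by (simp add: sum.inter_filter)
  also have "\<dots> = (\<Sum>a\<in>GG B. \<Sum>r\<in>?R. if (\<forall>p\<in>PP B. a mod p \<noteq> r p) then 1 / real a else 0)"
    by (rule sum.swap)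
  also have "\<dots> = (\<Sum>a\<in>GG B. (1 / real a) * real (card {r\<in>?R. \<forall>p\<in>PP B. a mod p \<noteq> r p}))"
  proof (rule sum.cong[OF refl])
    fix a
    have "(\<Sum>r\<in>?R. if (\<forall>p\<in>PP B. a mod p \<noteq> r p) then 1 / real a else 0) = (\<Sum>r\<in>{r\<in>?R. \<forall>p\<in>PP B. a mod p \<noteq> r p}. 1 / real a)"
      by (rule sum.inter_filter[symmetric, OF fR])
    also have "\<dots> = (1 / real a) * real (card {r\<in>?R. \<forall>p\<in>PP B. a mod p \<noteq> r p})" by simp
    finally show "(\<Sum>r\<in>?R. if (\<forall>p\<in>PP B. a mod p \<noteq> r p) then 1 / real a else 0) = (1 / real a) * real (card {r\<in>?R. \<forall>p\<in>PP B. a mod p \<noteq> r p})" .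
  qed
  also have "\<dots> = (\<Sum>a\<in>GG B. (1 / real a) * real (\<Prod>p\<in>PP B. card (Wset p - {a mod p})))"
    by (simp add: card_avoid)
  finally show ?thesis .
qed

definition EE :: "nat \<Rightarrow> real" where
  "EE B = (\<Sum>a\<in>GG B. (1 / real a) * (\<Prod>p\<in>PP B. real (card (Wset p - {a mod p})) / real (card (Wset p))))"

lemma exists_good:
  "\<exists>r\<in>PiE (PP B) Wset. (\<Sum>a\<in>AA B r. 1 / real a) \<ge> EE B"
proof (rule ccontr)
  let ?R = "PiE (PP B) Wset"
  assume "\<not> ?thesis"
  then have lt: "\<And>r. r \<in> ?R \<Longrightarrow> (\<Sum>a\<in>AA B r. 1 / real a) < EE B" by auto
  have fR: "finite ?R" by (simp add: finite_PiE)
  have wne: "\<And>p. p \<in> PP B \<Longrightarrow> Wset p \<noteq> {}"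
  proof -
    fix p assume "p \<in> PP B"
    then have "card (Wset p) \<ge> 2" using card_Wset_ge2 unfolding PP_def by simp
    then show "Wset p \<noteq> {}" by auto
  qed
  have neR: "?R \<noteq> {}" using wne by (simp add: PiE_eq_empty_iff)
  have cR: "real (card ?R) = (\<Prod>p\<in>PP B. real (card (Wset p)))" by (simp add: card_PiE)
  have cRpos: "(\<Prod>p\<in>PP B. real (card (Wset p))) > 0"
    using wne by (intro prod_pos) (auto simp: card_gt_0_iff)
  have "(\<Sum>r\<in>?R. \<Sum>a\<in>AA B r. 1 / real a) < (\<Sum>r\<in>?R. EE B)"
    using fR neR lt by (intro sum_strict_mono) auto
  also have "\<dots> = real (card ?R) * EE B" by simp
  also have "\<dots> = (\<Sum>a\<in>GG B. (1 / real a) * real (\<Prod>p\<in>PP B. card (Wset p - {a mod p})))"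
  proof -
    have "real (card ?R) * EE B = (\<Sum>a\<in>GG B. real (card ?R) * ((1 / real a) * (\<Prod>p\<in>PP B. real (card (Wset p - {a mod p})) / real (card (Wset p)))))"
      unfolding EE_def by (simp add: sum_distrib_left)
    also have "\<dots> = (\<Sum>a\<in>GG B. (1 / real a) * real (\<Prod>p\<in>PP B. card (Wset p - {a mod p})))"
    proof (rule sum.cong[OF refl])
      fix a
      have "(\<Prod>p\<in>PP B. real (card (Wset p - {a mod p})) / real (card (Wset p)))
          = (\<Prod>p\<in>PP B. real (card (Wset p - {a mod p}))) / (\<Prod>p\<in>PP B. real (card (Wset p)))"
        by (rule prod_dividef)
      note prodeq = this
      have "real (card ?R) * ((1 / real a) * (\<Prod>p\<in>PP B. real (card (Wset p - {a mod p})) / real (card (Wset p))))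
          = (\<Prod>p\<in>PP B. real (card (Wset p))) * ((1 / real a) * ((\<Prod>p\<in>PP B. real (card (Wset p - {a mod p}))) / (\<Prod>p\<in>PP B. real (card (Wset p)))))"
        by (simp only: cR prodeq)
      also have "\<dots> = (1 / real a) * (\<Prod>p\<in>PP B. real (card (Wset p - {a mod p})))"
        using cRpos wne by (simp add: field_simps)
      also have "\<dots> = (1 / real a) * real (\<Prod>p\<in>PP B. card (Wset p - {a mod p}))"
        by (simp add: of_nat_prod)
      finally show "real (card ?R) * ((1 / real a) * (\<Prod>p\<in>PP B. real (card (Wset p - {a mod p})) / real (card (Wset p))))
          = (1 / real a) * real (\<Prod>p\<in>PP B. card (Wset p - {a mod p}))" .
    qed
    finally show ?thesis .
  qed
  also have "\<dots> = (\<Sum>r\<in>?R. \<Sum>a\<in>AA B r. 1 / real a)" by (rule avg_identity[symmetric])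
  finally show False by simp
qed

definition pen :: "nat \<Rightarrow> nat \<Rightarrow> real" where
  "pen p c = (if c \<in> Wset p then 1 / real (card (Wset p)) + 2 * (1 / real (card (Wset p)))^2 else 0)"

definition Pen :: "nat \<Rightarrow> nat \<Rightarrow> real" where
  "Pen B a = (\<Sum>p\<in>PP B. pen p (a mod p))"

lemma factor_lb:
  assumes p5: "p \<ge> 5"
  shows "exp (- pen p c) \<le> real (card (Wset p - {c})) / real (card (Wset p))"
proof (cases "c \<in> Wset p")
  case True
  define w where "w = real (card (Wset p))"
  have w2: "w \<ge> 2" unfolding w_def using card_Wset_ge2[OF p5] by simp
  have cd: "card (Wset p - {c}) = card (Wset p) - 1" using True by simp
  have cw: "real (card (Wset p - {c})) = w - 1" unfolding cd w_def using card_Wset_ge2[OF p5] by (simp add: of_nat_diff)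
  have ratio: "real (card (Wset p - {c})) / real (card (Wset p)) = 1 - 1 / w"
    unfolding cw w_def[symmetric] using w2 by (simp add: diff_divide_distrib)
  have t0: "0 \<le> 1 / w" using w2 by simp
  have t1: "1 / w \<le> 1 / 2" using w2 by (simp add: field_simps)
  have "- (1/w) - 2 * (1/w)^2 \<le> ln (1 - 1/w)" by (rule ln_one_minus_pos_lower_bound[OF t0 t1])
  then have "exp (- (1/w) - 2 * (1/w)^2) \<le> exp (ln (1 - 1/w))" by simp
  also have "exp (ln (1 - 1/w)) = 1 - 1/w" using w2 by (simp add: field_simps)
  finally show ?thesis unfolding ratio pen_def using True w_def by simp
next
  case False
  then have "Wset p - {c} = Wset p" by auto
  moreover have "card (Wset p) > 0" using card_Wset_ge2[OF p5] by simp
  ultimately show ?thesis unfolding pen_def using False by (auto simp: card_gt_0_iff)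
qed

lemma EE_lb1:
  "EE B \<ge> (\<Sum>b\<in>{1..B}. (1 / (6 * real b)) * exp (- Pen B (6*b)))"
proof -
  have "(\<Sum>b\<in>{1..B}. (1 / (6 * real b)) * exp (- Pen B (6*b))) = (\<Sum>a\<in>GG B. (1 / real a) * exp (- Pen B a))"
    unfolding GG_def by (subst sum.reindex) (auto simp: inj_on_def)
  also have "\<dots> \<le> EE B" unfolding EE_def
  proof (intro sum_mono mult_left_mono)
    fix a assume "a \<in> GG B"
    have "exp (- Pen B a) = (\<Prod>p\<in>PP B. exp (- pen p (a mod p)))"
      unfolding Pen_def by (simp add: exp_sum[symmetric] sum_negf)
    also have "\<dots> \<le> (\<Prod>p\<in>PP B. real (card (Wset p - {a mod p})) / real (card (Wset p)))"
      by (intro prod_mono conjI factor_lb) (auto simp: PP_def)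
    finally show "exp (- Pen B a) \<le> (\<Prod>p\<in>PP B. real (card (Wset p - {a mod p})) / real (card (Wset p)))" .
  qed simp
  finally show ?thesis .
qed

lemma sum_inv_sq_le:
  assumes "n \<ge> 1"
  shows "(\<Sum>m\<in>{2..n}. 1 / real m ^ 2) \<le> 1 - 1 / real n"
  using assms
proof (induction n rule: dec_induct)
  case base then show ?case by simp
next
  case (step n)
  have "{2..Suc n} = insert (Suc n) {2..n}" using step by auto
  then have "(\<Sum>m\<in>{2..Suc n}. 1 / real m ^ 2) = 1 / real (Suc n) ^ 2 + (\<Sum>m\<in>{2..n}. 1 / real m ^ 2)" by simp
  also have "\<dots> \<le> 1 / real (Suc n) ^ 2 + (1 - 1 / real n)" using step by simp
  also have "\<dots> \<le> 1 - 1 / real (Suc n)"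
  proof -
    have n1: "real n \<ge> 1" using step by simp
    have e: "1 / real n - 1 / real (Suc n) = 1 / (real n * real (Suc n))"
      using n1 by (simp add: field_simps)
    have le: "real n * real (Suc n) \<le> real (Suc n) ^ 2" by (simp add: power2_eq_square)
    have "1 / real (Suc n) ^ 2 \<le> 1 / (real n * real (Suc n))"
      by (rule divide_left_mono[OF le]) (use n1 in auto)
    then have "1 / real (Suc n) ^ 2 \<le> 1 / real n - 1 / real (Suc n)" using e by simp
    then show ?thesis by simp
  qed
  finally show ?case .
qed

lemma sum_Pset_inv_sq: "(\<Sum>p\<in>Pset n. 1 / real p ^ 2) \<le> 1"
proof (cases "n \<ge> 1")
  case True
  have "Pset n \<subseteq> {2..n}" unfolding Pset_def using prime_ge_2_nat by auto
  then have "(\<Sum>p\<in>Pset n. 1 / real p ^ 2) \<le> (\<Sum>m\<in>{2..n}. 1 / real m ^ 2)"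
    by (intro sum_mono2) auto
  also have "\<dots> \<le> 1 - 1 / real n" using sum_inv_sq_le[OF True] .
  also have "\<dots> \<le> 1" by simp
  finally show ?thesis .
next
  case False
  then have "Pset n = {}" by (auto simp: Pset_def dest: prime_ge_2_nat)
  then show ?thesis by simp
qed

lemma term_bound:
  assumes pP: "p \<in> PP B" and y1: "y \<ge> 1"
  shows "(1 / real (card (Wset p)) + 2 * (1 / real (card (Wset p)))^2) * real (card {b\<in>{y+1..2*y}. (6*b) mod p \<in> Wset p})
     \<le> (if p \<le> 24*y then real y / real p + 8 * real y * (1 / real p ^ 2) + 4 else 0)"
proof -
  have pp: "prime p" and p5: "p \<ge> 5" using pP unfolding PP_def by auto
  define w where "w = real (card (Wset p))"
  define t where "t = 1 / w"
  have w2: "w \<ge> 2" unfolding w_def using card_Wset_ge2[OF p5] by simp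
  have w4: "w \<ge> real p / 4" unfolding w_def using card_Wset_ge[OF p5] .
  have t0: "t \<ge> 0" unfolding t_def using w2 by simp
  have th: "t \<le> 1/2" unfolding t_def using w2 by (simp add: field_simps)
  have p0: "real p > 0" using p5 by simp
  have t4: "t \<le> 4 / real p" unfolding t_def using w4 p0 w2 by (simp add: field_simps)
  show ?thesis
  proof (cases "p \<le> 24*y")
    case True
    have c: "real (card {b\<in>{y+1..2*y}. (6*b) mod p \<in> Wset p}) \<le> w * (real y / real p + 2)"
      unfolding w_def by (rule count_W[OF pp p5 finite_Wset])
    have "(t + 2 * t^2) * real (card {b\<in>{y+1..2*y}. (6*b) mod p \<in> Wset p}) \<le> (t + 2 * t^2) * (w * (real y / real p + 2))"
      using c t0 by (intro mult_left_mono) auto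
    also have "\<dots> = (1 + 2 * t) * (real y / real p + 2)"
      unfolding t_def using w2 by (simp add: field_simps power2_eq_square)
    also have "\<dots> = real y / real p + 2 * t * (real y / real p) + 2 + 4 * t" by (simp add: algebra_simps)
    also have "\<dots> \<le> real y / real p + 8 * real y * (1 / real p ^ 2) + 4"
    proof -
      have "2 * t * (real y / real p) \<le> 2 * (4 / real p) * (real y / real p)"
        using t4 p0 by (intro mult_right_mono mult_left_mono) auto
      also have "\<dots> = 8 * real y * (1 / real p ^ 2)" by (simp add: power2_eq_square)
      finally show ?thesis using th by linarith
    qed
    finally show ?thesis using True unfolding t_def w_def by simp
  next
    case False
    have "{b\<in>{y+1..2*y}. (6*b) mod p \<in> Wset p} = {}"
    proof (rule ccontr)
      assume "\<not> ?thesis"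
      then obtain b where b: "b \<in> {y+1..2*y}" "(6*b) mod p \<in> Wset p" by auto
      have "6*b < p" using b(1) False by auto
      then have "(6*b) mod p = 6*b" by simp
      then have "6*b \<ge> p div 2 + 1" using b(2) unfolding Wset_def by simp
      then show False using b(1) False by auto
    qed
    then have c0: "card {b\<in>{y+1..2*y}. (6*b) mod p \<in> Wset p} = 0" by (simp only: card.empty)
    have rhs: "(if p \<le> 24*y then real y / real p + 8 * real y * (1 / real p ^ 2) + 4 else 0) = 0"
      using False by simp
    show ?thesis unfolding rhs c0 by simp
  qed
qed

lemma block_pen:
  assumes y1: "y \<ge> 1"
  shows "(\<Sum>b\<in>{y+1..2*y}. Pen B (6*b)) \<le> real y * (Sp (24*y) + 104)"
proof -
  let ?T = "\<lambda>p. (1 / real (card (Wset p)) + 2 * (1 / real (card (Wset p)))^2) * real (card {b\<in>{y+1..2*y}. (6*b) mod p \<in> Wset p})"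
  let ?U = "\<lambda>p. real y / real p + 8 * real y * (1 / real p ^ 2) + 4"
  have "(\<Sum>b\<in>{y+1..2*y}. Pen B (6*b)) = (\<Sum>p\<in>PP B. \<Sum>b\<in>{y+1..2*y}. pen p ((6*b) mod p))"
    unfolding Pen_def by (rule sum.swap)
  also have "\<dots> = (\<Sum>p\<in>PP B. ?T p)"
  proof (rule sum.cong[OF refl])
    fix p
    have "(\<Sum>b\<in>{y+1..2*y}. pen p ((6*b) mod p)) = (\<Sum>b\<in>{b\<in>{y+1..2*y}. (6*b) mod p \<in> Wset p}. (1 / real (card (Wset p)) + 2 * (1 / real (card (Wset p)))^2))"
      unfolding pen_def by (rule sum.inter_filter[symmetric]) simp
    also have "\<dots> = ?T p" by simp
    finally show "(\<Sum>b\<in>{y+1..2*y}. pen p ((6*b) mod p)) = ?T p" .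
  qed
  also have "\<dots> \<le> (\<Sum>p\<in>PP B. if p \<le> 24*y then ?U p else 0)"
    by (intro sum_mono term_bound y1)
  also have "\<dots> = (\<Sum>p\<in>{p\<in>PP B. p \<le> 24*y}. ?U p)"
    by (rule sum.inter_filter[symmetric]) simp
  also have "\<dots> \<le> (\<Sum>p\<in>Pset (24*y). ?U p)"
    by (intro sum_mono2) (auto simp: PP_def Pset_def)
  also have "\<dots> = real y * Sp (24*y) + 8 * real y * (\<Sum>p\<in>Pset (24*y). 1 / real p ^ 2) + 4 * real (card (Pset (24*y)))"
    unfolding Sp_def by (simp add: sum.distrib sum_distrib_left)
  also have "\<dots> \<le> real y * Sp (24*y) + 8 * real y * 1 + 4 * real (24*y)"
  proof -
    have "8 * real y * (\<Sum>p\<in>Pset (24*y). 1 / real p ^ 2) \<le> 8 * real y * 1"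
      using sum_Pset_inv_sq by (intro mult_left_mono) auto
    moreover have "real (card (Pset (24*y))) \<le> real (24*y)"
      using card_Pset[of "24*y"] by (simp only: of_nat_le_iff)
    ultimately show ?thesis by linarith
  qed
  also have "\<dots> = real y * (Sp (24*y) + 104)" by (simp add: algebra_simps)
  finally show ?thesis .
qed

lemma block_lb:
  assumes y1: "y \<ge> 1"
  shows "(\<Sum>b\<in>{y+1..2*y}. (1 / (6 * real b)) * exp (- Pen B (6*b))) \<ge> exp (- (Sp (24*y) + 104)) / 12"
proof -
  define \<mu> where "\<mu> = Sp (24*y) + 104"
  have yp: "real y > 0" using y1 by simp
  have cb: "card {y+1..2*y} = y" by simp
  have t1: "\<And>b. b \<in> {y+1..2*y} \<Longrightarrow> exp (- Pen B (6*b)) \<ge> exp (- \<mu>) * (1 + \<mu> - Pen B (6*b))"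
  proof -
    fix b
    have "1 + (\<mu> - Pen B (6*b)) \<le> exp (\<mu> - Pen B (6*b))" by (rule exp_ge_add_one_self)
    then have "exp (- \<mu>) * (1 + (\<mu> - Pen B (6*b))) \<le> exp (- \<mu>) * exp (\<mu> - Pen B (6*b))"
      by (intro mult_left_mono) auto
    also have "exp (- \<mu>) * exp (\<mu> - Pen B (6*b)) = exp (- Pen B (6*b))" by (simp add: exp_add[symmetric])
    finally show "exp (- Pen B (6*b)) \<ge> exp (- \<mu>) * (1 + \<mu> - Pen B (6*b))" by (metis add_diff_eq)
  qed
  have "(\<Sum>b\<in>{y+1..2*y}. exp (- Pen B (6*b))) \<ge> (\<Sum>b\<in>{y+1..2*y}. exp (- \<mu>) * (1 + \<mu> - Pen B (6*b)))"
    by (intro sum_mono t1)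
  moreover have "(\<Sum>b\<in>{y+1..2*y}. exp (- \<mu>) * (1 + \<mu> - Pen B (6*b)))
       = exp (- \<mu>) * (real y * (1 + \<mu>) - (\<Sum>b\<in>{y+1..2*y}. Pen B (6*b)))"
    by (simp add: sum_distrib_left[symmetric] sum_subtractf cb)
  moreover have "real y * (1 + \<mu>) - (\<Sum>b\<in>{y+1..2*y}. Pen B (6*b)) \<ge> real y"
    using block_pen[OF y1, of B] unfolding \<mu>_def by (simp add: algebra_simps)
  ultimately have S: "(\<Sum>b\<in>{y+1..2*y}. exp (- Pen B (6*b))) \<ge> exp (- \<mu>) * real y"
    by (smt (verit) exp_gt_zero mult_left_mono)
  have "(\<Sum>b\<in>{y+1..2*y}. (1 / (6 * real b)) * exp (- Pen B (6*b))) \<ge> (\<Sum>b\<in>{y+1..2*y}. (1 / (12 * real y)) * exp (- Pen B (6*b)))"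
  proof (intro sum_mono mult_right_mono)
    fix b assume "b \<in> {y+1..2*y}"
    then have "6 * real b \<le> 12 * real y" "6 * real b > 0" by auto
    then show "1 / (12 * real y) \<le> 1 / (6 * real b)" by (intro divide_left_mono) auto
  qed simp
  also have "(\<Sum>b\<in>{y+1..2*y}. (1 / (12 * real y)) * exp (- Pen B (6*b))) = (1 / (12 * real y)) * (\<Sum>b\<in>{y+1..2*y}. exp (- Pen B (6*b)))"
    by (simp add: sum_distrib_left)
  finally have "(\<Sum>b\<in>{y+1..2*y}. (1 / (6 * real b)) * exp (- Pen B (6*b))) \<ge> (1 / (12 * real y)) * (exp (- \<mu>) * real y)"
    using S yp by (smt (verit) divide_pos_pos mult_left_mono)
  then show ?thesis unfolding \<mu>_def using yp by simp
qed

lemma blocks_sum: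
  fixes g :: "nat \<Rightarrow> real"
  assumes g0: "\<And>b. g b \<ge> 0"
  shows "(\<Sum>b\<in>{1..2^J}. g b) \<ge> (\<Sum>j<J. \<Sum>b\<in>{2^j+1..2*2^j}. g b)"
proof (induction J)
  case 0 then show ?case using g0 by simp
next
  case (Suc J)
  have "{1..2^Suc J} = {1..2^J} \<union> {2^J+1..(2::nat)*2^J}" by auto
  moreover have "{1..2^J} \<inter> {2^J+1..(2::nat)*2^J} = {}" by auto
  ultimately have "(\<Sum>b\<in>{1..2^Suc J}. g b) = (\<Sum>b\<in>{1..2^J}. g b) + (\<Sum>b\<in>{2^J+1..2*2^J}. g b)"
    by (simp add: sum.union_disjoint)
  then show ?case using Suc by simp
qed

lemma harm_ln: "(\<Sum>j<J. 1 / (real j + 1)) \<ge> ln (real J + 1)"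
proof (induction J)
  case 0 then show ?case by simp
next
  case (Suc J)
  have "ln (real (Suc J) + 1) = ln (real J + 1) + ln (1 + 1 / (real J + 1))"
  proof -
    have "real (Suc J) + 1 = (real J + 1) * (1 + 1 / (real J + 1))" by (simp add: field_simps)
    moreover have "1 + 1 / (real J + 1) > 0" by (simp add: add_pos_pos)
    ultimately show ?thesis by (simp add: ln_mult)
  qed
  also have "ln (1 + 1 / (real J + 1)) \<le> 1 / (real J + 1)" by (rule ln_add_one_self_le_self) simp
  finally show ?case using Suc by simp
qed

lemma ln_block:
  "0 < ln (real (24 * 2^j)) \<and> ln (real (24 * 2^j)) \<le> real j + 5"
proof
  have "(1::nat) \<le> 2^j" by simp
  then have "real (24 * 2^j) > 1" by linarith
  then show "0 < ln (real (24 * 2^j))" by simp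
  have "real (24 * 2^j) \<le> real ((2::nat)^(j+5))" by (simp add: power_add)
  then have "ln (real (24 * 2^j)) \<le> ln (real ((2::nat)^(j+5)))" by (intro ln_mono) auto
  also have "\<dots> = real (j+5) * ln 2" by (simp add: ln_realpow)
  also have "\<dots> \<le> real (j+5) * 1"
  proof -
    have "ln (2::real) \<le> 2 - 1" by (rule ln_le_minus_one) simp
    then show ?thesis by (intro mult_left_mono) auto
  qed
  finally show "ln (real (24 * 2^j)) \<le> real j + 5" by simp
qed

lemma EE_lb: "\<exists>c>0. \<forall>J. EE (2^J) \<ge> c * ln (real J + 1)"
proof -
  obtain C where C: "\<forall>N\<ge>3. Sp N \<le> ln (ln (real N)) + C" using mertens by blast
  define c0 where "c0 = exp (- (C + 104))"
  have c0p: "c0 > 0" unfolding c0_def by simp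
  have bj: "exp (- (Sp (24 * 2^j) + 104)) / 12 \<ge> (c0 / 60) * (1 / (real j + 1))" for j
  proof -
    let ?N = "24 * 2^j :: nat"
    have lnN: "0 < ln (real ?N)" "ln (real ?N) \<le> real j + 5" using ln_block[of j] by auto
    have "(1::nat) \<le> 2^j" by simp
    then have "?N \<ge> 3" by linarith
    then have sp: "Sp ?N \<le> ln (ln (real ?N)) + C" using C by blast
    have "exp (- (ln (ln (real ?N)) + C + 104)) \<le> exp (- (Sp ?N + 104))" using sp by simp
    moreover have "exp (- (ln (ln (real ?N)) + C + 104)) = c0 / ln (real ?N)"
      unfolding c0_def using lnN(1) by (simp add: exp_add exp_diff exp_minus' field_simps exp_ln)
    moreover have "c0 / ln (real ?N) \<ge> c0 / (real j + 5)"
      using lnN c0p by (intro divide_left_mono) auto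
    moreover have "c0 / (real j + 5) \<ge> 12 * ((c0 / 60) * (1 / (real j + 1)))"
      using c0p by (simp add: field_simps)
    ultimately show ?thesis by linarith
  qed
  have "EE (2^J) \<ge> (c0 / 60) * ln (real J + 1)" for J
  proof -
    let ?g = "\<lambda>b. (1 / (6 * real b)) * exp (- Pen (2^J) (6*b))"
    have "(c0 / 60) * ln (real J + 1) \<le> (c0 / 60) * (\<Sum>j<J. 1 / (real j + 1))"
      using harm_ln c0p by (intro mult_left_mono) auto
    also have "\<dots> = (\<Sum>j<J. (c0 / 60) * (1 / (real j + 1)))"
      by (simp add: sum_distrib_left)
    also have "\<dots> \<le> (\<Sum>j<J. exp (- (Sp (24 * 2^j) + 104)) / 12)"
      by (intro sum_mono bj)
    also have "\<dots> \<le> (\<Sum>j<J. \<Sum>b\<in>{2^j+1..2*2^j}. ?g b)"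
      by (intro sum_mono block_lb) simp
    also have "\<dots> \<le> (\<Sum>b\<in>{1..2^J}. ?g b)"
      by (rule blocks_sum) simp
    also have "\<dots> \<le> EE (2^J)" by (rule EE_lb1)
    finally show ?thesis by simp
  qed
  then show ?thesis using c0p by (intro exI[of _ "c0 / 60"]) auto
qed

theorem lemma6:
  fixes M :: real
  assumes "M > 0"
  shows "\<exists>A. admissible A \<and> (\<Sum>a\<in>A. 1 / real a) > M"
proof -
  obtain c where c0: "c > 0" and c: "\<And>J. EE (2^J) \<ge> c * ln (real J + 1)" using EE_lb by blast
  define J where "J = nat \<lceil>exp (M / c)\<rceil>"
  have "real J \<ge> exp (M / c)" unfolding J_def by linarith
  then have "real J + 1 > exp (M / c)" by simp
  then have "ln (real J + 1) > ln (exp (M / c))" by (intro ln_less_cancel_iff[THEN iffD2]) auto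
  then have "ln (real J + 1) > M / c" by simp
  then have "c * ln (real J + 1) > M" using c0 by (simp add: field_simps)
  then have EM: "EE (2^J) > M" using c[of J] by linarith
  obtain r where r: "r \<in> PiE (PP (2^J)) Wset" and rs: "(\<Sum>a\<in>AA (2^J) r. 1 / real a) \<ge> EE (2^J)"
    using exists_good by blast
  show ?thesis
    using adm_AA[OF r] rs EM by (intro exI[of _ "AA (2^J) r"]) auto
qed

end
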